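(* Let $X$ be a compact antipodal metric space. Then $\mathrm{rad}(\mathbf{E}(X))=\frac{\mathrm{diam}(X)}{2}$, and the constant function $f_0\equiv\frac{\mathrm{diam}(X)}{2}$ is the unique center of $\mathbf{E}(X)$.
   Context: A metric space $X$ is antipodal if for every $x\in X$ there exists $\bar x\in X$ with $d_X(x,\bar x)=d_X(x,y)+d_X(y,\bar x)$ for all $y\in X$. For a metric space $X$, $\Delta(X)=\{f:X\to\mathbb{R}\text{ bounded}:f(x)+f(x')\ge d_X(x,x')\}$ and the tight span $\mathbf{E}(X)$ is the set of pointwise-minimal elements of $\Delta(X)$ with the sup-norm metric. For a bounded metric space $Y$, $\mathrm{rad}(Y)=\inf_{x\in Y}\sup_{y\in Y}d_Y(x,y)$, and $x_0\in Y$ is a center if $\sup_{y\in Y}d_Y(x_0,y)=\mathrm{rad}(Y)$. *)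

theory Defs
  imports "HOL-Analysis.Analysis"
begin

text \<open>Functions X -> real are modelled as functions 'a => real
  which vanish outside X (extensional convention).\<close>

definition antipodal :: "'a::metric_space set \<Rightarrow> bool" where
  "antipodal X \<longleftrightarrow>
     (\<forall>x\<in>X. \<exists>x'\<in>X. \<forall>y\<in>X. dist x x' = dist x y + dist y x')"

definition Delta :: "'a::metric_space set \<Rightarrow> ('a \<Rightarrow> real) set" where
  "Delta X = {f. (\<forall>x. x \<notin> X \<longrightarrow> f x = 0) \<and> bounded (f ` X) \<and>
                 (\<forall>x\<in>X. \<forall>x'\<in>X. f x + f x' \<ge> dist x x')}"

definition tight_span :: "'a::metric_space set \<Rightarrow> ('a \<Rightarrow> real) set" where
  "tight_span X = {f \<in> Delta X. \<forall>g\<in>Delta X. (\<forall>x\<in>X. g x \<le> f x) \<longrightarrow> (\<forall>x\<in>X. g x = f x)}"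

definition supdist :: "'a set \<Rightarrow> ('a \<Rightarrow> real) \<Rightarrow> ('a \<Rightarrow> real) \<Rightarrow> real" where
  "supdist X f g = (SUP x\<in>X. \<bar>f x - g x\<bar>)"

definition rad :: "'b set \<Rightarrow> ('b \<Rightarrow> 'b \<Rightarrow> real) \<Rightarrow> real" where
  "rad Y d = (INF x\<in>Y. SUP y\<in>Y. d x y)"

definition is_center :: "'b set \<Rightarrow> ('b \<Rightarrow> 'b \<Rightarrow> real) \<Rightarrow> 'b \<Rightarrow> bool" where
  "is_center Y d x0 \<longleftrightarrow> x0 \<in> Y \<and> (SUP y\<in>Y. d x0 y) = rad Y d"

end

theory Submission
  imports Defs
begin

lemma anti_const:
  fixes x y x' y' :: "'a::metric_space"
  assumes "x \<in> X" "y \<in> X" "x' \<in> X" "y' \<in> X"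
    and "\<forall>z\<in>X. dist x x' = dist x z + dist z x'"
    and "\<forall>z\<in>X. dist y y' = dist y z + dist z y'"
  shows "dist y y' = dist x x'"
proof -
  have 1: "dist x x' = dist x y + dist y x'" using assms by blast
  have 2: "dist x x' = dist x y' + dist y' x'" using assms by blast
  have 3: "dist y y' = dist y x + dist x y'" using assms by blast
  have 4: "dist y y' = dist y x' + dist x' y'" using assms by blast
  show ?thesis using 1 2 3 4 dist_commute[of x y] dist_commute[of y' x'] by linarith
qed

theorem proposition2p25:
  fixes X :: "'a::metric_space set"
  assumes "X \<noteq> {}" and "compact X" and "antipodal X"
  shows "rad (tight_span X) (supdist X) = diameter X / 2 \<and>
         (\<forall>f. is_center (tight_span X) (supdist X) f \<longleftrightarrow>
              f = (\<lambda>x. if x \<in> X then diameter X / 2 else 0))"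
proof -
  define D where "D = diameter X"
  define E where "E = tight_span X"
  define f0 where "f0 = (\<lambda>x. if x \<in> X then D / 2 else (0::real))"
  define dx where "dx = (\<lambda>x y. if y \<in> X then dist x y else (0::real))"
  obtain x0 where x0: "x0 \<in> X" using assms(1) by blast
  have "\<forall>x\<in>X. \<exists>x'. x' \<in> X \<and> (\<forall>y\<in>X. dist x x' = dist x y + dist y x')"
    using assms(3) unfolding antipodal_def by blast
  then obtain a where a: "\<And>x. x \<in> X \<Longrightarrow> a x \<in> X"
    and a2: "\<And>x y. x \<in> X \<Longrightarrow> y \<in> X \<Longrightarrow> dist x (a x) = dist x y + dist y (a x)"
    by metis
  define c where "c = dist x0 (a x0)"
  have ac: "\<And>y. y \<in> X \<Longrightarrow> dist y (a y) = c"
  proof -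
    fix y assume y: "y \<in> X"
    show "dist y (a y) = c" unfolding c_def
      by (rule anti_const[of x0 X y "a x0" "a y"]) (use x0 y a a2 in auto)
  qed
  have le_c: "\<And>y z. y \<in> X \<Longrightarrow> z \<in> X \<Longrightarrow> dist y z \<le> c"
  proof -
    fix y z assume y: "y \<in> X" and z: "z \<in> X"
    show "dist y z \<le> c" using ac[OF y] a2[OF y z] zero_le_dist[of z "a y"] by linarith
  qed
  have Dc: "D = c"
    unfolding D_def diameter_def using assms(1)
    apply simp
    apply (rule cSup_eq_maximum)
    using x0 a le_c c_def by auto
  have aD: "\<And>x. x \<in> X \<Longrightarrow> dist x (a x) = D" using ac Dc by simp
  have leD: "\<And>y z. y \<in> X \<Longrightarrow> z \<in> X \<Longrightarrow> dist y z \<le> D" using le_c Dc by simp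
  have D0: "0 \<le> D" using leD[OF x0 x0] by simp
  have Eprops: "f \<in> Delta X" "\<And>g. g \<in> Delta X \<Longrightarrow> (\<forall>x\<in>X. g x \<le> f x) \<Longrightarrow> (\<forall>x\<in>X. g x = f x)"
    if "f \<in> E" for f using that unfolding E_def tight_span_def by auto
  have Dprops: "\<forall>x. x \<notin> X \<longrightarrow> f x = 0" "\<forall>x\<in>X. \<forall>x'\<in>X. f x + f x' \<ge> dist x x'"
    if "f \<in> Delta X" for f using that unfolding Delta_def by auto
  have fD: "f x + f (a x) \<ge> D" if "f \<in> E" "x \<in> X" for f x
  proof -
    have "dist x (a x) \<le> f x + f (a x)" using Dprops(2)[OF Eprops(1)[OF that(1)]] that(2) a[OF that(2)] by blast
    then show ?thesis using aD[OF that(2)] by simp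
  qed
  have f_nonneg: "0 \<le> f x" if "f \<in> E" "x \<in> X" for f x
  proof -
    have "dist x x \<le> f x + f x" using Dprops(2)[OF Eprops(1)[OF that(1)]] that(2) by blast
    then show ?thesis by simp
  qed
  have f_leD: "f x \<le> D" if f: "f \<in> E" and x: "x \<in> X" for f x
  proof (rule ccontr)
    assume H: "\<not> f x \<le> D"
    define g where "g = f(x := D)"
    have fDel: "f \<in> Delta X" using Eprops(1)[OF f] .
    have "g \<in> Delta X"
      unfolding Delta_def
    proof (intro CollectI conjI)
      show "\<forall>y. y \<notin> X \<longrightarrow> g y = 0" using Dprops(1)[OF fDel] x unfolding g_def by auto
      have "bounded (f ` X)" using fDel unfolding Delta_def by auto
      moreover have "g ` X \<subseteq> insert D (f ` X)" unfolding g_def by auto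
      ultimately show "bounded (g ` X)" by (meson bounded_insert bounded_subset)
      show "\<forall>y\<in>X. \<forall>y'\<in>X. dist y y' \<le> g y + g y'"
      proof (intro ballI)
        fix y y' assume y: "y \<in> X" and y': "y' \<in> X"
        show "dist y y' \<le> g y + g y'"
        proof (cases "y = x"; cases "y' = x")
          assume "y = x" "y' = x" then show ?thesis using D0 g_def by simp
        next
          assume "y = x" "y' \<noteq> x" then show ?thesis using leD[OF y y'] f_nonneg[OF f y'] g_def by simp
        next
          assume "y \<noteq> x" "y' = x" then show ?thesis using leD[OF y y'] f_nonneg[OF f y] g_def by simp
        next
          assume "y \<noteq> x" "y' \<noteq> x" then show ?thesis using Dprops(2)[OF fDel] y y' g_def by simp
        qed
      qed
    qed
    moreover have "\<forall>y\<in>X. g y \<le> f y" using H g_def by auto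
    ultimately have "g x = f x" using Eprops(2)[OF f] x by blast
    then show False using H g_def by simp
  qed
  have f0E: "f0 \<in> E"
    unfolding E_def tight_span_def
  proof (intro CollectI conjI ballI impI)
    show "f0 \<in> Delta X" unfolding Delta_def f0_def
      using leD by (auto simp: bounded_real intro!: exI[of _ "\<bar>D/2\<bar>"])
    fix g x assume g: "g \<in> Delta X" and le: "\<forall>x\<in>X. g x \<le> f0 x" and x: "x \<in> X"
    have "dist x (a x) \<le> g x + g (a x)" using Dprops(2)[OF g] x a[OF x] by blast
    then have "g x + g (a x) \<ge> D" using aD[OF x] by simp
    moreover have "g (a x) \<le> D/2" using le a[OF x] f0_def by auto
    moreover have "g x \<le> D/2" using le x f0_def by auto
    ultimately show "g x = f0 x" using x f0_def by auto
  qed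
  have dxE: "dx x \<in> E" if x: "x \<in> X" for x
    unfolding E_def tight_span_def
  proof (intro CollectI conjI ballI impI)
    show "dx x \<in> Delta X" unfolding Delta_def dx_def
      using leD x by (auto simp: bounded_real dist_triangle3 intro!: exI[of _ D])
    fix g y assume g: "g \<in> Delta X" and le: "\<forall>y\<in>X. g y \<le> dx x y" and y: "y \<in> X"
    have "g x \<le> 0" using le x dx_def by auto
    moreover have "dist x x \<le> g x + g x" using Dprops(2)[OF g] x by blast
    moreover have "g y + g x \<ge> dist y x" using Dprops(2)[OF g] x y by blast
    moreover have "g y \<le> dist x y" using le y dx_def by auto
    ultimately show "g y = dx x y" using y dx_def by (simp add: dist_commute)
  qed
  have absD: "\<bar>f y - g y\<bar> \<le> D" if "f \<in> E" "g \<in> E" "y \<in> X" for f g y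
    using f_nonneg[OF that(1,3)] f_leD[OF that(1,3)] f_nonneg[OF that(2,3)] f_leD[OF that(2,3)] by linarith
  have bdd1: "bdd_above ((\<lambda>y. \<bar>f y - g y\<bar>) ` X)" if "f \<in> E" "g \<in> E" for f g
    using absD[OF that] by (intro bdd_aboveI2) auto
  have sup_upper: "\<bar>f y - g y\<bar> \<le> supdist X f g" if "f \<in> E" "g \<in> E" "y \<in> X" for f g y
    unfolding supdist_def using cSUP_upper[OF that(3) bdd1[OF that(1,2)]] .
  have sup_leD: "supdist X f g \<le> D" if "f \<in> E" "g \<in> E" for f g
    unfolding supdist_def using absD[OF that] assms(1) by (intro cSUP_least) auto
  have bdd2: "bdd_above (supdist X f ` E)" if "f \<in> E" for f
    using sup_leD[OF that] by (intro bdd_aboveI2) auto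
  have Enonempty: "E \<noteq> {}" using f0E by blast
  have f0sup: "supdist X f0 g \<le> D/2" if g: "g \<in> E" for g
    unfolding supdist_def using assms(1)
  proof (intro cSUP_least)
    fix y assume y: "y \<in> X"
    have "f0 y = D/2" using y f0_def by simp
    then show "\<bar>f0 y - g y\<bar> \<le> D/2" using f_nonneg[OF g y] f_leD[OF g y] unfolding abs_le_iff by linarith
  qed auto
  have lowx: "f x \<le> (SUP g\<in>E. supdist X f g)" if f: "f \<in> E" and x: "x \<in> X" for f x
  proof -
    have "\<bar>f x - dx x x\<bar> \<le> supdist X f (dx x)" using sup_upper[OF f dxE[OF x] x] .
    then have "f x \<le> supdist X f (dx x)" using x dx_def by simp
    also have "\<dots> \<le> (SUP g\<in>E. supdist X f g)" using cSUP_upper[OF dxE[OF x] bdd2[OF f]] .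
    finally show ?thesis .
  qed
  have low: "D/2 \<le> (SUP g\<in>E. supdist X f g)" if f: "f \<in> E" for f
    using lowx[OF f x0] lowx[OF f a[OF x0]] fD[OF f x0] by linarith
  have f0S: "(SUP g\<in>E. supdist X f0 g) = D/2"
    using low[OF f0E] cSUP_least[OF Enonempty, of "supdist X f0", OF f0sup] by linarith
  have radD: "rad E (supdist X) = D/2"
    unfolding rad_def
  proof (rule cInf_eq_minimum)
    show "D/2 \<in> (\<lambda>f. SUP g\<in>E. supdist X f g) ` E" using f0E f0S by (metis image_eqI)
    fix r assume "r \<in> (\<lambda>f. SUP g\<in>E. supdist X f g) ` E"
    then show "D/2 \<le> r" using low by blast
  qed
  have strict: "D/2 < (SUP g\<in>E. supdist X f g)" if f: "f \<in> E" and ne: "f \<noteq> f0" for f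
  proof -
    obtain x where "f x \<noteq> f0 x" using ne by blast
    moreover have "\<forall>x. x \<notin> X \<longrightarrow> f x = 0" using Dprops(1)[OF Eprops(1)[OF f]] .
    ultimately have x: "x \<in> X" unfolding f0_def by (metis (mono_tags))
    have fx: "f x \<noteq> D/2" using x \<open>f x \<noteq> f0 x\<close> unfolding f0_def by simp
    show ?thesis
    proof (cases "f x > D/2")
      case True then show ?thesis using lowx[OF f x] by linarith
    next
      case False then have "f (a x) > D/2" using fD[OF f x] fx by linarith
      then show ?thesis using lowx[OF f a[OF x]] by linarith
    qed
  qed
  have "\<forall>f. is_center E (supdist X) f \<longleftrightarrow> f = f0"
  proof (intro allI iffI)
    fix f assume "is_center E (supdist X) f"
    then have "f \<in> E" "(SUP g\<in>E. supdist X f g) = D/2" unfolding is_center_def using radD by auto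
    then show "f = f0" using strict by fastforce
  next
    fix f assume "f = f0"
    then show "is_center E (supdist X) f" unfolding is_center_def using f0E f0S radD by simp
  qed
  then show ?thesis using radD unfolding E_def f0_def D_def by simp
qed

end
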